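(* Let $\mathcal{R}_{\mathrm{con}}$ be the set of isomorphism classes of finite connected racks. The homomorphism of abelian groups $$\mathbb{Z}\{\mathcal{R}_{\mathrm{con}}\}\longrightarrow \mathrm{B}(\mathcal{R}),\qquad [R]\longmapsto b(R),$$ from the free abelian group with basis $\mathcal{R}_{\mathrm{con}}$ to the Burnside ring of finite racks, is an isomorphism. In other words, the elements $b(R)$, for $R$ ranging over the finite connected racks up to isomorphism, form an integral basis of $\mathrm{B}(\mathcal{R})$. In particular, the abelian group $\mathrm{B}(\mathcal{R})$ is torsion-free.
   Context: A rack is a set $R$ with a binary operation $\rhd$ such that every left multiplication $\ell_a\colon b\mapsto a\rhd b$ is a bijection and $a\rhd(b\rhd c)=(a\rhd b)\rhd(a\rhd c)$ for all $a,b,c$. Morphisms of racks are maps preserving $\rhd$. The inner automorphism group $\mathrm{Inn}(R)$ is the subgroup of the symmetric group on $R$ generated by all $\ell_a$. A rack is connected if it is non-empty and $\mathrm{Inn}(R)$ acts transitively on $R$. A subrack of $R$ is a subset $S$ with $\ell_s(S)=S$ for all $s\in S$. A decomposition of $R$ into $S$ and $T$ means that $S,T$ are disjoint subracks (possibly empty) with $S\cup T=R$. The Burnside ring of finite racks $\mathrm{B}(\mathcal{R})$ is the abelian group generated by symbols $b(R)$, one for each finite rack $R$, subject to the relations $b(R_1)=b(R_2)$ whenever $R_1\cong R_2$, and $b(R)=b(S)+b(T)$ whenever $R$ decomposes into subracks $S$ and $T$. *)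

theory Defs
  imports "HOL-Algebra.Free_Abelian_Groups" "HOL-Algebra.Bij"
          "HOL-Algebra.Generated_Groups" "HOL-Algebra.Coset"
begin

definition is_rack :: "'a set \<Rightarrow> ('a \<Rightarrow> 'a \<Rightarrow> 'a) \<Rightarrow> bool" where
  "is_rack A op \<longleftrightarrow>
     (\<forall>a\<in>A. \<forall>b\<in>A. op a b \<in> A) \<and>
     (\<forall>a\<in>A. bij_betw (op a) A A) \<and>
     (\<forall>a\<in>A. \<forall>b\<in>A. \<forall>c\<in>A. op a (op b c) = op (op a b) (op a c))"

definition rack_iso :: "'a set \<times> ('a \<Rightarrow> 'a \<Rightarrow> 'a) \<Rightarrow> 'b set \<times> ('b \<Rightarrow> 'b \<Rightarrow> 'b) \<Rightarrow> bool" where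
  "rack_iso R1 R2 \<longleftrightarrow> (\<exists>f. bij_betw f (fst R1) (fst R2) \<and>
     (\<forall>a\<in>fst R1. \<forall>b\<in>fst R1. f (snd R1 a b) = snd R2 (f a) (f b)))"

definition Inn :: "'a set \<Rightarrow> ('a \<Rightarrow> 'a \<Rightarrow> 'a) \<Rightarrow> ('a \<Rightarrow> 'a) set" where
  "Inn A op = generate (BijGroup A) ((\<lambda>a. restrict (op a) A) ` A)"

definition rack_connected :: "'a set \<Rightarrow> ('a \<Rightarrow> 'a \<Rightarrow> 'a) \<Rightarrow> bool" where
  "rack_connected A op \<longleftrightarrow> A \<noteq> {} \<and> (\<forall>x\<in>A. \<forall>y\<in>A. \<exists>g\<in>Inn A op. g x = y)"

definition subrack :: "'a set \<Rightarrow> 'a set \<Rightarrow> ('a \<Rightarrow> 'a \<Rightarrow> 'a) \<Rightarrow> bool" where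
  "subrack S A op \<longleftrightarrow> S \<subseteq> A \<and> (\<forall>s\<in>S. op s ` S = S)"

definition rack_decomp :: "'a set \<Rightarrow> 'a set \<Rightarrow> 'a set \<Rightarrow> ('a \<Rightarrow> 'a \<Rightarrow> 'a) \<Rightarrow> bool" where
  "rack_decomp S T A op \<longleftrightarrow> subrack S A op \<and> subrack T A op \<and> S \<inter> T = {} \<and> S \<union> T = A"

text \<open>Finite racks, represented with carriers that are finite subsets of nat
  (every finite rack is isomorphic to one of these).\<close>
type_synonym nrack = "nat set \<times> (nat \<Rightarrow> nat \<Rightarrow> nat)"

definition fin_racks :: "nrack set" where
  "fin_racks = {(A, op). finite A \<and> is_rack A op}"

definition burnside_rels :: "nrack set \<Rightarrow> (nrack \<Rightarrow>\<^sub>0 int) set" where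
  "burnside_rels X =
     {frag_of R1 - frag_of R2 | R1 R2. R1 \<in> X \<and> R2 \<in> X \<and> rack_iso R1 R2} \<union>
     {frag_of (A, op) - frag_of (S, op) - frag_of (T, op) | A op S T.
        (A, op) \<in> X \<and> rack_decomp S T A op}"

definition burnside_sub :: "(nrack \<Rightarrow>\<^sub>0 int) set" where
  "burnside_sub = generate (free_Abelian_group fin_racks) (burnside_rels fin_racks)"

definition burnside_group :: "(nrack \<Rightarrow>\<^sub>0 int) set monoid" where
  "burnside_group = free_Abelian_group fin_racks Mod burnside_sub"

definition bclass :: "nrack \<Rightarrow> (nrack \<Rightarrow>\<^sub>0 int) set" where
  "bclass R = burnside_sub #>\<^bsub>free_Abelian_group fin_racks\<^esub> frag_of R"

definition iso_class :: "nrack \<Rightarrow> nrack set" where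
  "iso_class R = {R' \<in> fin_racks. rack_iso R R'}"

definition conn_classes :: "nrack set set" where
  "conn_classes = {iso_class (A, op) | A op. (A, op) \<in> fin_racks \<and> rack_connected A op}"

text \<open>The homomorphism Z{R_con} -> B(R), [R] |-> b(R) (via a chosen representative
  of each class; the class b(R) does not depend on that choice).\<close>
definition conn_to_burnside :: "(nrack set \<Rightarrow>\<^sub>0 int) \<Rightarrow> (nrack \<Rightarrow>\<^sub>0 int) set" where
  "conn_to_burnside c = burnside_sub #>\<^bsub>free_Abelian_group fin_racks\<^esub>
      frag_extend (\<lambda>C. frag_of (SOME R. R \<in> C)) c"

end

theory Submission
  imports Defs
begin

definition inv_set :: "'a set \<Rightarrow> ('a \<Rightarrow> 'a \<Rightarrow> 'a) \<Rightarrow> 'a set \<Rightarrow> bool" where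
  "inv_set A op S \<longleftrightarrow> S \<subseteq> A \<and> (\<forall>a\<in>A. \<forall>s\<in>S. op a s \<in> S)"

definition conn' :: "'a set \<Rightarrow> ('a \<Rightarrow> 'a \<Rightarrow> 'a) \<Rightarrow> bool" where
  "conn' A op \<longleftrightarrow> A \<noteq> {} \<and> (\<forall>S. inv_set A op S \<longrightarrow> S = {} \<or> S = A)"

lemma rack_bij: "is_rack A op \<Longrightarrow> a \<in> A \<Longrightarrow> bij_betw (op a) A A"
  by (simp add: is_rack_def)

lemma rack_closed: "is_rack A op \<Longrightarrow> a \<in> A \<Longrightarrow> b \<in> A \<Longrightarrow> op a b \<in> A"
  by (simp add: is_rack_def)

lemma inv_set_image:
  assumes "is_rack A op" "finite A" "inv_set A op S" "a \<in> A"
  shows "op a ` S = S"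
proof -
  have "op a ` S \<subseteq> S" using assms(3,4) by (auto simp: inv_set_def)
  moreover have "inj_on (op a) S" using rack_bij[OF assms(1,4)] assms(3)
    unfolding bij_betw_def inv_set_def using inj_on_subset by blast
  moreover have "finite S" using assms(2,3) finite_subset unfolding inv_set_def by blast
  ultimately show ?thesis by (rule endo_inj_surj[rotated])
qed

lemma restrict_in_Bij: "is_rack A op \<Longrightarrow> a \<in> A \<Longrightarrow> restrict (op a) A \<in> Bij A"
  by (simp add: Bij_def rack_bij)

lemma Inn_preserves:
  assumes "is_rack A op" "finite A" "inv_set A op S" "g \<in> Inn A op" "s \<in> S"
  shows "g s \<in> S"
  using assms(4,5) unfolding Inn_def
proof (induction arbitrary: s rule: generate.induct)
  case one
  then show ?case using assms(3) by (auto simp: BijGroup_def inv_set_def)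
next
  case (incl h)
  then obtain a where a: "a \<in> A" "h = restrict (op a) A" by auto
  then show ?case using incl assms(3) by (auto simp: inv_set_def)
next
  case (inv h)
  then obtain a where a: "a \<in> A" "h = restrict (op a) A" by auto
  have B: "h \<in> Bij A" using a restrict_in_Bij[OF assms(1)] by simp
  have sA: "s \<in> A" using inv.prems assms(3) by (auto simp: inv_set_def)
  have "(inv\<^bsub>BijGroup A\<^esub> h) s = inv_into A h s" using inv_BijGroup[OF B] sA by simp
  also have "inv_into A h s = inv_into A (op a) s"
    unfolding a(2) inv_into_def by (rule arg_cong[where f=Eps]) auto
  also have "\<dots> \<in> S"
  proof -
    have "op a ` S = S" using inv_set_image[OF assms(1,2,3) a(1)] .
    then obtain t where t: "t \<in> S" "s = op a t" using inv.prems by (metis imageE)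
    have tA: "t \<in> A" using t assms(3) by (auto simp: inv_set_def)
    have "inv_into A (op a) (op a t) = t"
      using rack_bij[OF assms(1) a(1)] tA by (simp add: bij_betw_def inv_into_f_f)
    then show ?thesis using t by simp
  qed
  finally show ?case .
next
  case (eng h1 h2)
  have gi: "generate (BijGroup A) ((\<lambda>a. restrict (op a) A) ` A) \<subseteq> carrier (BijGroup A)"
    by (rule group.generate_incl[OF group_BijGroup]) (auto simp: BijGroup_def restrict_in_Bij[OF assms(1)])
  have h1B: "h1 \<in> Bij A" and h2B: "h2 \<in> Bij A" using gi eng.hyps by (auto simp: BijGroup_def)
  have sA: "s \<in> A" using eng.prems assms(3) by (auto simp: inv_set_def)
  have "h1 \<otimes>\<^bsub>BijGroup A\<^esub> h2 = compose A h1 h2" using h1B h2B by (simp add: BijGroup_def)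
  then show ?case using eng sA by (simp add: compose_def)
qed

lemma conn_iff:
  assumes "is_rack A op" "finite A"
  shows "rack_connected A op \<longleftrightarrow> conn' A op"
proof
  assume c: "rack_connected A op"
  show "conn' A op" unfolding conn'_def
  proof (intro conjI allI impI)
    show "A \<noteq> {}" using c by (simp add: rack_connected_def)
    fix S assume S: "inv_set A op S"
    show "S = {} \<or> S = A"
    proof (cases "S = {}")
      case False
      then obtain x where x: "x \<in> S" by auto
      have "A \<subseteq> S"
      proof
        fix y assume y: "y \<in> A"
        have "x \<in> A" using x S by (auto simp: inv_set_def)
        then obtain g where "g \<in> Inn A op" "g x = y" using c y by (auto simp: rack_connected_def)
        then show "y \<in> S" using Inn_preserves[OF assms S] x by blast
      qed
      then show ?thesis using S by (auto simp: inv_set_def)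
    qed simp
  qed
next
  assume c: "conn' A op"
  show "rack_connected A op" unfolding rack_connected_def
  proof (intro conjI ballI)
    show "A \<noteq> {}" using c by (simp add: conn'_def)
    fix x y assume x: "x \<in> A" and y: "y \<in> A"
    define S where "S = {z \<in> A. \<exists>g\<in>Inn A op. g x = z}"
    have "inv_set A op S" unfolding inv_set_def
    proof (intro conjI ballI)
      show "S \<subseteq> A" by (auto simp: S_def)
      fix a s assume a: "a \<in> A" and s: "s \<in> S"
      then obtain g where g: "g \<in> Inn A op" "g x = s" "s \<in> A" by (auto simp: S_def)
      have gi: "Inn A op \<subseteq> carrier (BijGroup A)"
        unfolding Inn_def
        by (rule group.generate_incl[OF group_BijGroup]) (auto simp: BijGroup_def restrict_in_Bij[OF assms(1)])
      have hB: "restrict (op a) A \<in> Bij A" using restrict_in_Bij[OF assms(1) a] .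
      have gB: "g \<in> Bij A" using gi g by (auto simp: BijGroup_def)
      have m: "restrict (op a) A \<otimes>\<^bsub>BijGroup A\<^esub> g \<in> Inn A op"
        unfolding Inn_def
        using g(1) a unfolding Inn_def by (intro generate.eng[OF generate.incl]) auto
      have "(restrict (op a) A \<otimes>\<^bsub>BijGroup A\<^esub> g) x = op a s"
        using hB gB x g by (simp add: BijGroup_def compose_def)
      then show "op a s \<in> S" unfolding S_def using m rack_closed[OF assms(1) a g(3)] by blast
    qed
    moreover have "x \<in> S"
    proof -
      have "\<one>\<^bsub>BijGroup A\<^esub> \<in> Inn A op" unfolding Inn_def by (rule generate.one)
      moreover have "\<one>\<^bsub>BijGroup A\<^esub> x = x" using x by (simp add: BijGroup_def)
      ultimately show ?thesis unfolding S_def using x by blast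
    qed
    ultimately have "S = A" using c unfolding conn'_def by blast
    then show "\<exists>g\<in>Inn A op. g x = y" using y unfolding S_def by blast
  qed
qed

lemma subrack_rack:
  assumes "is_rack A op" "subrack S A op"
  shows "is_rack S op"
proof -
  have SA: "S \<subseteq> A" and im: "\<And>s. s \<in> S \<Longrightarrow> op s ` S = S" using assms(2) by (auto simp: subrack_def)
  show ?thesis unfolding is_rack_def
  proof (intro conjI ballI)
    fix a b assume "a \<in> S" "b \<in> S" then show "op a b \<in> S" using im by blast
  next
    fix a assume a: "a \<in> S"
    have "inj_on (op a) S" using rack_bij[OF assms(1)] a SA
      unfolding bij_betw_def using inj_on_subset by blast
    then show "bij_betw (op a) S S" using im[OF a] by (simp add: bij_betw_def)
  next
    fix a b c assume "a \<in> S" "b \<in> S" "c \<in> S"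
    then show "op a (op b c) = op (op a b) (op a c)" using assms(1) SA
      unfolding is_rack_def by blast
  qed
qed

lemma subrack_fin: "(A, op) \<in> fin_racks \<Longrightarrow> subrack S A op \<Longrightarrow> (S, op) \<in> fin_racks"
  unfolding fin_racks_def using subrack_rack
  by (auto simp: subrack_def intro: finite_subset)

lemma inv_set_decomp:
  assumes "is_rack A op" "finite A" "inv_set A op S"
  shows "rack_decomp S (A - S) A op"
proof -
  have SA: "S \<subseteq> A" using assms(3) by (simp add: inv_set_def)
  have imS: "op a ` S = S" if "a \<in> A" for a using inv_set_image[OF assms that] .
  have imT: "op a ` (A - S) = A - S" if a: "a \<in> A" for a
  proof -
    have b: "bij_betw (op a) A A" using rack_bij[OF assms(1) a] .
    have "op a ` (A - S) = op a ` A - op a ` S"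
      using b SA unfolding bij_betw_def by (metis Diff_subset inj_on_image_set_diff order_refl)
    also have "\<dots> = A - S" using b imS[OF a] by (simp add: bij_betw_def)
    finally show ?thesis .
  qed
  show ?thesis unfolding rack_decomp_def subrack_def using SA imS imT by blast
qed

lemma decomp_inv_set:
  assumes "is_rack A op" "rack_decomp S T A op"
  shows "inv_set A op S"
proof -
  have SA: "S \<subseteq> A" and TA: "T \<subseteq> A" and disj: "S \<inter> T = {}" and un: "S \<union> T = A"
    and imS: "\<And>s. s \<in> S \<Longrightarrow> op s ` S = S" and imT: "\<And>s. s \<in> T \<Longrightarrow> op s ` T = T"
    using assms(2) by (auto simp: rack_decomp_def subrack_def)
  have "op a x \<in> S" if a: "a \<in> A" and x: "x \<in> S" for a x
  proof (cases "a \<in> S")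
    case True then show ?thesis using imS x by blast
  next
    case False
    then have aT: "a \<in> T" using a un by blast
    have b: "bij_betw (op a) A A" using rack_bij[OF assms(1) a] .
    have xA: "x \<in> A" using x SA by blast
    show ?thesis
    proof (rule ccontr)
      assume "op a x \<notin> S"
      then have "op a x \<in> T" using b xA un by (auto simp: bij_betw_def)
      then obtain y where y: "y \<in> T" "op a x = op a y" using imT[OF aT] by (metis imageE)
      then have "x = y" using b xA TA by (auto simp: bij_betw_def inj_on_def)
      then show False using x y disj by blast
    qed
  qed
  then show ?thesis using SA by (simp add: inv_set_def)
qed

lemma rack_iso_refl: "rack_iso R R"
  unfolding rack_iso_def by (rule exI[of _ id]) simp

lemma rack_iso_trans:
  assumes "rack_iso R1 R2" "rack_iso R2 R3" shows "rack_iso R1 R3"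
proof -
  obtain f where f: "bij_betw f (fst R1) (fst R2)"
    "\<forall>a\<in>fst R1. \<forall>b\<in>fst R1. f (snd R1 a b) = snd R2 (f a) (f b)"
    using assms(1) by (auto simp: rack_iso_def)
  obtain g where g: "bij_betw g (fst R2) (fst R3)"
    "\<forall>a\<in>fst R2. \<forall>b\<in>fst R2. g (snd R2 a b) = snd R3 (g a) (g b)"
    using assms(2) by (auto simp: rack_iso_def)
  have "bij_betw (g \<circ> f) (fst R1) (fst R3)" using f g bij_betw_trans by blast
  moreover have "\<forall>a\<in>fst R1. \<forall>b\<in>fst R1. (g \<circ> f) (snd R1 a b) = snd R3 ((g \<circ> f) a) ((g \<circ> f) b)"
  proof (intro ballI)
    fix a b assume a: "a \<in> fst R1" and b: "b \<in> fst R1"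
    have "f a \<in> fst R2" "f b \<in> fst R2" using a b f(1) by (auto simp: bij_betw_def)
    then show "(g \<circ> f) (snd R1 a b) = snd R3 ((g \<circ> f) a) ((g \<circ> f) b)"
      using f(2) g(2) a b by simp
  qed
  ultimately show ?thesis unfolding rack_iso_def by blast
qed

lemma iso_inv_hom:
  assumes f: "bij_betw f A1 A2" "\<forall>a\<in>A1. \<forall>b\<in>A1. f (op1 a b) = op2 (f a) (f b)"
    and cl: "\<forall>a\<in>A1. \<forall>b\<in>A1. op1 a b \<in> A1"
  shows "\<forall>a\<in>A2. \<forall>b\<in>A2. inv_into A1 f (op2 a b) = op1 (inv_into A1 f a) (inv_into A1 f b)"
proof (intro ballI)
  fix a b assume a: "a \<in> A2" and b: "b \<in> A2"
  let ?g = "inv_into A1 f"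
  have ga: "?g a \<in> A1" "f (?g a) = a" using a f(1)
    by (auto simp: bij_betw_def inv_into_into f_inv_into_f)
  have gb: "?g b \<in> A1" "f (?g b) = b" using b f(1)
    by (auto simp: bij_betw_def inv_into_into f_inv_into_f)
  have "op2 a b = f (op1 (?g a) (?g b))" using f(2) ga gb by metis
  then show "?g (op2 a b) = op1 (?g a) (?g b)"
    using cl ga gb f(1) by (simp add: bij_betw_def inv_into_f_f)
qed

lemma rack_iso_sym:
  assumes "rack_iso R1 R2" "\<forall>a\<in>fst R1. \<forall>b\<in>fst R1. snd R1 a b \<in> fst R1"
  shows "rack_iso R2 R1"
proof -
  obtain f where f: "bij_betw f (fst R1) (fst R2)"
    "\<forall>a\<in>fst R1. \<forall>b\<in>fst R1. f (snd R1 a b) = snd R2 (f a) (f b)"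
    using assms(1) by (auto simp: rack_iso_def)
  show ?thesis unfolding rack_iso_def
    using bij_betw_inv_into[OF f(1)] iso_inv_hom[OF f assms(2)] by blast
qed

lemma fin_racks_closed: "R \<in> fin_racks \<Longrightarrow> \<forall>a\<in>fst R. \<forall>b\<in>fst R. snd R a b \<in> fst R"
  by (auto simp: fin_racks_def is_rack_def)

lemma iso_class_eq:
  assumes "R1 \<in> fin_racks" "rack_iso R1 R2"
  shows "iso_class R1 = iso_class R2"
proof -
  have s: "rack_iso R2 R1" using rack_iso_sym[OF assms(2) fin_racks_closed[OF assms(1)]] .
  show ?thesis unfolding iso_class_def using rack_iso_trans assms(2) s by blast
qed

definition comps :: "'a set \<Rightarrow> ('a \<Rightarrow> 'a \<Rightarrow> 'a) \<Rightarrow> 'a set set" where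
  "comps A op = {C. subrack C A op \<and> conn' C op \<and>
     (\<forall>D. subrack D A op \<and> conn' D op \<and> C \<subseteq> D \<longrightarrow> D = C)}"

definition psi0 :: "nrack \<Rightarrow> (nrack set \<Rightarrow>\<^sub>0 int)" where
  "psi0 R = (\<Sum>C\<in>comps (fst R) (snd R). frag_of (iso_class (C, snd R)))"

lemma comps_sub: "C \<in> comps A op \<Longrightarrow> C \<subseteq> A"
  by (simp add: comps_def subrack_def)

lemma comps_finite: "finite A \<Longrightarrow> finite (comps A op)"
  by (rule finite_subset[of _ "Pow A"]) (auto dest: comps_sub)

lemma conn'_ne: "conn' C op \<Longrightarrow> C \<noteq> {}"
  by (simp add: conn'_def)

lemma conn_in_part:
  assumes "is_rack A op" "rack_decomp S T A op" "subrack C A op" "conn' C op"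
  shows "C \<subseteq> S \<or> C \<subseteq> T"
proof -
  have iS: "inv_set A op S" using decomp_inv_set[OF assms(1,2)] .
  have CA: "C \<subseteq> A" and imC: "\<And>c. c \<in> C \<Longrightarrow> op c ` C = C" using assms(3) by (auto simp: subrack_def)
  have "inv_set C op (C \<inter> S)" unfolding inv_set_def
  proof (intro conjI ballI)
    fix a x assume a: "a \<in> C" and x: "x \<in> C \<inter> S"
    have "op a x \<in> C" using imC[OF a] x by blast
    moreover have "op a x \<in> S" using iS a x CA unfolding inv_set_def by blast
    ultimately show "op a x \<in> C \<inter> S" by blast
  qed auto
  then have "C \<inter> S = {} \<or> C \<inter> S = C" using assms(4) by (simp add: conn'_def)
  moreover have "A = S \<union> T" using assms(2) by (simp add: rack_decomp_def)
  ultimately show ?thesis using CA by blast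
qed

lemma subrack_up: "subrack C S op \<Longrightarrow> S \<subseteq> A \<Longrightarrow> subrack C A op"
  by (auto simp: subrack_def)

lemma subrack_down: "subrack C A op \<Longrightarrow> C \<subseteq> S \<Longrightarrow> subrack C S op"
  by (auto simp: subrack_def)

lemma comps_decomp_left:
  assumes "is_rack A op" "rack_decomp S T A op"
  shows "comps S op = {C \<in> comps A op. C \<subseteq> S}"
proof -
  have SA: "S \<subseteq> A" and TA: "T \<subseteq> A" and disj: "S \<inter> T = {}"
    using assms(2) by (auto simp: rack_decomp_def subrack_def)
  show ?thesis
  proof (rule equalityI; rule subsetI)
    fix C assume C: "C \<in> comps S op"
    have CS: "C \<subseteq> S" using comps_sub[OF C] .
    have sub: "subrack C A op" and cn: "conn' C op"
      using C subrack_up[OF _ SA] by (auto simp: comps_def)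
    have "D = C" if D: "subrack D A op" "conn' D op" "C \<subseteq> D" for D
    proof -
      have "D \<subseteq> S \<or> D \<subseteq> T" using conn_in_part[OF assms D(1,2)] .
      moreover have "\<not> D \<subseteq> T" using D(3) CS disj conn'_ne[OF cn] by blast
      ultimately have "D \<subseteq> S" by blast
      then have "subrack D S op" using subrack_down D(1) by blast
      then show "D = C" using C D by (auto simp: comps_def)
    qed
    then show "C \<in> {C \<in> comps A op. C \<subseteq> S}" using sub cn CS by (auto simp: comps_def)
  next
    fix C assume C: "C \<in> {C \<in> comps A op. C \<subseteq> S}"
    then have CS: "C \<subseteq> S" and CA: "C \<in> comps A op" by auto
    have "subrack C S op" using CA CS subrack_down by (auto simp: comps_def)
    moreover have "D = C" if D: "subrack D S op" "conn' D op" "C \<subseteq> D" for D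
      using CA D subrack_up[OF D(1) SA] by (auto simp: comps_def)
    ultimately show "C \<in> comps S op" using CA by (auto simp: comps_def)
  qed
qed

lemma rack_decomp_sym: "rack_decomp S T A op \<Longrightarrow> rack_decomp T S A op"
  by (auto simp: rack_decomp_def)

lemma comps_decomp:
  assumes "is_rack A op" "rack_decomp S T A op"
  shows "comps A op = comps S op \<union> comps T op" "comps S op \<inter> comps T op = {}"
proof -
  have disj: "S \<inter> T = {}" using assms(2) by (auto simp: rack_decomp_def)
  have L: "comps S op = {C \<in> comps A op. C \<subseteq> S}" using comps_decomp_left[OF assms] .
  have R: "comps T op = {C \<in> comps A op. C \<subseteq> T}" using comps_decomp_left[OF assms(1) rack_decomp_sym[OF assms(2)]] .
  have "C \<subseteq> S \<or> C \<subseteq> T" if "C \<in> comps A op" for C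
    using conn_in_part[OF assms] that by (auto simp: comps_def)
  then show "comps A op = comps S op \<union> comps T op" using L R by blast
  have "C \<noteq> {}" if "C \<in> comps A op" for C using that conn'_ne by (auto simp: comps_def)
  then show "comps S op \<inter> comps T op = {}" using L R disj by blast
qed

lemma psi0_decomp:
  assumes "(A, op) \<in> fin_racks" "rack_decomp S T A op"
  shows "psi0 (A, op) = psi0 (S, op) + psi0 (T, op)"
proof -
  have r: "is_rack A op" and fA: "finite A" using assms(1) by (auto simp: fin_racks_def)
  have fS: "finite S" and fT: "finite T" using assms(2) fA
    by (auto simp: rack_decomp_def subrack_def intro: finite_subset)
  show ?thesis unfolding psi0_def fst_conv snd_conv comps_decomp(1)[OF r assms(2)]
    by (rule sum.union_disjoint) (auto simp: comps_finite fS fT comps_decomp(2)[OF r assms(2)])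
qed

lemma comps_conn:
  assumes "is_rack A op" "conn' A op"
  shows "comps A op = {A}"
proof -
  have sA: "subrack A A op" using assms(1) by (auto simp: subrack_def is_rack_def bij_betw_def)
  have "A \<in> comps A op" using sA assms(2) by (auto simp: comps_def subrack_def)
  moreover have "C = A" if "C \<in> comps A op" for C
    using that sA assms(2) comps_sub[OF that] by (auto simp: comps_def)
  ultimately show ?thesis by blast
qed

lemma psi0_conn:
  assumes "(A, op) \<in> fin_racks" "conn' A op"
  shows "psi0 (A, op) = frag_of (iso_class (A, op))"
  using assms comps_conn[of A op] by (simp add: psi0_def fin_racks_def)

lemma subrack_transfer:
  assumes f: "bij_betw f A1 A2" "\<forall>a\<in>A1. \<forall>b\<in>A1. f (op1 a b) = op2 (f a) (f b)"
    and C: "subrack C A1 op1"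
  shows "subrack (f ` C) A2 op2"
proof -
  have CA: "C \<subseteq> A1" and im: "\<And>c. c \<in> C \<Longrightarrow> op1 c ` C = C" using C by (auto simp: subrack_def)
  have "op2 (f c) ` f ` C = f ` C" if c: "c \<in> C" for c
  proof -
    have "op2 (f c) ` f ` C = f ` (op1 c ` C)"
      using f(2) c CA by (auto simp: image_iff) (metis subsetD)+
    then show ?thesis using im[OF c] by simp
  qed
  moreover have "f ` C \<subseteq> A2" using CA f(1) by (auto simp: bij_betw_def)
  ultimately show ?thesis by (auto simp: subrack_def)
qed

lemma conn_transfer:
  assumes f: "bij_betw f A1 A2" "\<forall>a\<in>A1. \<forall>b\<in>A1. f (op1 a b) = op2 (f a) (f b)"
    and C: "subrack C A1 op1" and cn: "conn' C op1"
  shows "conn' (f ` C) op2"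
proof -
  have CA: "C \<subseteq> A1" and im: "\<And>c. c \<in> C \<Longrightarrow> op1 c ` C = C" using C by (auto simp: subrack_def)
  show ?thesis unfolding conn'_def
  proof (intro conjI allI impI)
    show "f ` C \<noteq> {}" using conn'_ne[OF cn] by simp
    fix S' assume S': "inv_set (f ` C) op2 S'"
    define S where "S = C \<inter> f -` S'"
    have "inv_set C op1 S" unfolding inv_set_def
    proof (intro conjI ballI)
      fix a s assume a: "a \<in> C" and s: "s \<in> S"
      have "op1 a s \<in> C" using im[OF a] s by (auto simp: S_def)
      moreover have "f (op1 a s) = op2 (f a) (f s)" using f(2) a s CA by (auto simp: S_def)
      moreover have "op2 (f a) (f s) \<in> S'" using S' a s by (auto simp: inv_set_def S_def)
      ultimately show "op1 a s \<in> S" by (simp add: S_def)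
    qed (auto simp: S_def)
    then have "S = {} \<or> S = C" using cn by (simp add: conn'_def)
    moreover have "S' = f ` S" using S' by (auto simp: inv_set_def S_def)
    ultimately show "S' = {} \<or> S' = f ` C" by auto
  qed
qed

lemma comps_map:
  assumes f: "bij_betw f A1 A2" "\<forall>a\<in>A1. \<forall>b\<in>A1. f (op1 a b) = op2 (f a) (f b)"
    and g: "bij_betw g A2 A1" "\<forall>a\<in>A2. \<forall>b\<in>A2. g (op2 a b) = op1 (g a) (g b)"
    and gf: "\<And>x. x \<in> A1 \<Longrightarrow> g (f x) = x" and fg: "\<And>y. y \<in> A2 \<Longrightarrow> f (g y) = y"
    and C: "C \<in> comps A1 op1"
  shows "f ` C \<in> comps A2 op2"
proof -
  have sC: "subrack C A1 op1" and cC: "conn' C op1" using C by (auto simp: comps_def)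
  have CA: "C \<subseteq> A1" using sC by (simp add: subrack_def)
  have "D = f ` C" if D: "subrack D A2 op2" "conn' D op2" "f ` C \<subseteq> D" for D
  proof -
    have DA: "D \<subseteq> A2" using D(1) by (simp add: subrack_def)
    have "subrack (g ` D) A1 op1" "conn' (g ` D) op1"
      using subrack_transfer[OF g D(1)] conn_transfer[OF g D(1,2)] by auto
    moreover have "C \<subseteq> g ` D" using D(3) CA gf by (auto simp: image_iff) (metis image_subset_iff subsetD)
    ultimately have "g ` D = C" using C by (auto simp: comps_def)
    then have "f ` g ` D = f ` C" by simp
    moreover have "f ` g ` D = D" using DA fg by (force simp: image_iff)
    ultimately show ?thesis by simp
  qed
  then show ?thesis using subrack_transfer[OF f sC] conn_transfer[OF f sC cC] by (auto simp: comps_def)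
qed

lemma psi0_iso:
  assumes R1: "R1 \<in> fin_racks" and R2: "R2 \<in> fin_racks" and iso: "rack_iso R1 R2"
  shows "psi0 R1 = psi0 R2"
proof -
  obtain A1 op1 where R1e: "R1 = (A1, op1)" by (cases R1)
  obtain A2 op2 where R2e: "R2 = (A2, op2)" by (cases R2)
  obtain f where f: "bij_betw f A1 A2" "\<forall>a\<in>A1. \<forall>b\<in>A1. f (op1 a b) = op2 (f a) (f b)"
    using iso by (auto simp: rack_iso_def R1e R2e)
  have cl1: "\<forall>a\<in>A1. \<forall>b\<in>A1. op1 a b \<in> A1" using fin_racks_closed[OF R1] by (simp add: R1e)
  define g where "g = inv_into A1 f"
  have g: "bij_betw g A2 A1" "\<forall>a\<in>A2. \<forall>b\<in>A2. g (op2 a b) = op1 (g a) (g b)"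
    using bij_betw_inv_into[OF f(1)] iso_inv_hom[OF f cl1] by (auto simp: g_def)
  have gf: "\<And>x. x \<in> A1 \<Longrightarrow> g (f x) = x" using f(1) by (simp add: g_def bij_betw_def inv_into_f_f)
  have fg: "\<And>y. y \<in> A2 \<Longrightarrow> f (g y) = y" using f(1) by (simp add: g_def bij_betw_def f_inv_into_f)
  have eq: "comps A2 op2 = (\<lambda>C. f ` C) ` comps A1 op1"
  proof (rule equalityI; rule subsetI)
    fix D assume D: "D \<in> comps A2 op2"
    have "g ` D \<in> comps A1 op1" using comps_map[OF g f fg gf D] .
    moreover have "D = f ` g ` D" using comps_sub[OF D] fg by (force simp: image_iff)
    ultimately show "D \<in> (\<lambda>C. f ` C) ` comps A1 op1" by blast
  next
    fix D assume "D \<in> (\<lambda>C. f ` C) ` comps A1 op1"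
    then show "D \<in> comps A2 op2" using comps_map[OF f g gf fg] by blast
  qed
  have inj: "inj_on (\<lambda>C. f ` C) (comps A1 op1)"
  proof (rule inj_onI)
    fix C D assume C: "C \<in> comps A1 op1" and D: "D \<in> comps A1 op1" and e: "f ` C = f ` D"
    have "g ` f ` C = C" using comps_sub[OF C] gf by (force simp: image_iff)
    moreover have "g ` f ` D = D" using comps_sub[OF D] gf by (force simp: image_iff)
    ultimately show "C = D" using e by metis
  qed
  have ic: "iso_class (C, op1) = iso_class (f ` C, op2)" if C: "C \<in> comps A1 op1" for C
  proof (rule iso_class_eq)
    have sC: "subrack C A1 op1" using C by (simp add: comps_def)
    show "(C, op1) \<in> fin_racks" using subrack_fin[OF R1[unfolded R1e] sC] .
    have CA: "C \<subseteq> A1" using sC by (simp add: subrack_def)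
    have "bij_betw f C (f ` C)" using f(1) CA by (auto simp: bij_betw_def intro: inj_on_subset)
    moreover have "\<forall>a\<in>C. \<forall>b\<in>C. f (op1 a b) = op2 (f a) (f b)" using f(2) CA by blast
    ultimately show "rack_iso (C, op1) (f ` C, op2)" by (auto simp: rack_iso_def)
  qed
  have "psi0 R2 = (\<Sum>D\<in>(\<lambda>C. f ` C) ` comps A1 op1. frag_of (iso_class (D, op2)))"
    by (simp add: psi0_def R2e eq)
  also have "\<dots> = (\<Sum>C\<in>comps A1 op1. frag_of (iso_class (f ` C, op2)))"
    by (simp add: sum.reindex[OF inj])
  also have "\<dots> = (\<Sum>C\<in>comps A1 op1. frag_of (iso_class (C, op1)))"
    by (rule sum.cong) (simp_all add: ic)
  also have "\<dots> = psi0 R1" by (simp add: psi0_def R1e)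
  finally show ?thesis by simp
qed

abbreviation "GG \<equiv> free_Abelian_group fin_racks"
abbreviation "FF \<equiv> free_Abelian_group conn_classes"

definition Emap :: "(nrack set \<Rightarrow>\<^sub>0 int) \<Rightarrow> (nrack \<Rightarrow>\<^sub>0 int)" where
  "Emap = frag_extend (\<lambda>C. frag_of (SOME R. R \<in> C))"

definition Psi :: "(nrack \<Rightarrow>\<^sub>0 int) \<Rightarrow> (nrack set \<Rightarrow>\<^sub>0 int)" where
  "Psi = frag_extend psi0"

lemma rels_carrier: "burnside_rels fin_racks \<subseteq> carrier GG"
proof
  fix x assume "x \<in> burnside_rels fin_racks"
  then consider (i) R1 R2 where "x = frag_of R1 - frag_of R2" "R1 \<in> fin_racks" "R2 \<in> fin_racks"
    | (d) A op S T where "x = frag_of (A, op) - frag_of (S, op) - frag_of (T, op)"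
        "(A, op) \<in> fin_racks" "rack_decomp S T A op"
    unfolding burnside_rels_def by blast
  then show "x \<in> carrier GG"
  proof cases
    case i
    then show ?thesis using keys_diff[of "frag_of R1" "frag_of R2"] by auto
  next
    case d
    then have "(S, op) \<in> fin_racks" "(T, op) \<in> fin_racks"
      using subrack_fin by (auto simp: rack_decomp_def)
    then show ?thesis using d keys_diff[of "frag_of (A, op) - frag_of (S, op)" "frag_of (T, op)"]
      keys_diff[of "frag_of (A, op)" "frag_of (S, op)"] by auto
  qed
qed

lemma N_subgroup: "subgroup burnside_sub GG"
  unfolding burnside_sub_def
  by (rule group.generate_is_subgroup[OF group_free_Abelian_group rels_carrier])

lemma N_carrier: "x \<in> burnside_sub \<Longrightarrow> Poly_Mapping.keys x \<subseteq> fin_racks"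
proof -
  assume x: "x \<in> burnside_sub"
  have "x \<in> carrier GG" by (rule subsetD[OF subgroup.subset[OF N_subgroup] x])
  then show ?thesis by simp
qed

lemma N_add: "a \<in> burnside_sub \<Longrightarrow> b \<in> burnside_sub \<Longrightarrow> a + b \<in> burnside_sub"
  using subgroup.m_closed[OF N_subgroup, of a b] by simp

lemma N_neg: "a \<in> burnside_sub \<Longrightarrow> - a \<in> burnside_sub"
  using subgroup.m_inv_closed[OF N_subgroup, of a] N_carrier[of a] inv_free_Abelian_group[of a fin_racks] by simp

lemma N_diff: "a \<in> burnside_sub \<Longrightarrow> b \<in> burnside_sub \<Longrightarrow> a - b \<in> burnside_sub"
proof -
  assume a: "a \<in> burnside_sub" and b: "b \<in> burnside_sub"
  have "a + - b \<in> burnside_sub" by (rule N_add[OF a N_neg[OF b]])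
  then show ?thesis by simp
qed

lemma rel_N: "x \<in> burnside_rels fin_racks \<Longrightarrow> x \<in> burnside_sub"
  unfolding burnside_sub_def by (rule generate.incl)

lemma Psi_rel: "x \<in> burnside_rels fin_racks \<Longrightarrow> Psi x = 0"
proof -
  assume "x \<in> burnside_rels fin_racks"
  then consider (i) R1 R2 where "x = frag_of R1 - frag_of R2" "R1 \<in> fin_racks" "R2 \<in> fin_racks" "rack_iso R1 R2"
    | (d) A op S T where "x = frag_of (A, op) - frag_of (S, op) - frag_of (T, op)"
        "(A, op) \<in> fin_racks" "rack_decomp S T A op"
    unfolding burnside_rels_def by blast
  then show ?thesis
  proof cases
    case i
    then show ?thesis using psi0_iso[OF i(2,3,4)] by (simp add: Psi_def frag_extend_diff)
  next
    case d
    then show ?thesis using psi0_decomp[OF d(2,3)] by (simp add: Psi_def frag_extend_diff)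
  qed
qed

lemma Psi_N: "x \<in> burnside_sub \<Longrightarrow> Psi x = 0"
  unfolding burnside_sub_def
proof (induction rule: generate.induct)
  case one then show ?case by (simp add: Psi_def)
next
  case (incl h) then show ?case by (rule Psi_rel)
next
  case (inv h)
  then have "inv\<^bsub>GG\<^esub> h = - h" using rels_carrier by auto
  then show ?case using Psi_rel[OF inv] by (simp add: Psi_def frag_extend_minus)
next
  case (eng h1 h2) then show ?case by (simp add: Psi_def frag_extend_add)
qed

lemma conn_class_rep:
  assumes "C \<in> conn_classes"
  shows "(SOME R. R \<in> C) \<in> C" "(SOME R. R \<in> C) \<in> fin_racks" "psi0 (SOME R. R \<in> C) = frag_of C"
proof -
  obtain A op where C: "C = iso_class (A, op)" "(A, op) \<in> fin_racks" "rack_connected A op"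
    using assms by (auto simp: conn_classes_def)
  have "(A, op) \<in> C" using C rack_iso_refl by (auto simp: iso_class_def)
  then show r: "(SOME R. R \<in> C) \<in> C" by (rule someI)
  then show f: "(SOME R. R \<in> C) \<in> fin_racks" using C by (auto simp: iso_class_def)
  have i: "rack_iso (A, op) (SOME R. R \<in> C)" using r C by (auto simp: iso_class_def)
  have c': "conn' A op" using C conn_iff by (auto simp: fin_racks_def)
  have "psi0 (SOME R. R \<in> C) = psi0 (A, op)" using psi0_iso[OF C(2) f i] by simp
  also have "\<dots> = frag_of C" using psi0_conn[OF C(2) c'] C(1) by simp
  finally show "psi0 (SOME R. R \<in> C) = frag_of C" .
qed

lemma Psi_Emap: "Poly_Mapping.keys c \<subseteq> conn_classes \<Longrightarrow> Psi (Emap c) = c"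
proof -
  assume k: "Poly_Mapping.keys c \<subseteq> conn_classes"
  have "Psi (Emap c) = frag_extend psi0 (frag_extend (frag_of \<circ> (\<lambda>C. SOME R. R \<in> C)) c)"
    by (simp add: Psi_def Emap_def o_def)
  also have "\<dots> = frag_extend (psi0 \<circ> (\<lambda>C. SOME R. R \<in> C)) c" by (rule frag_extend_compose)
  also have "\<dots> = frag_extend frag_of c"
    by (rule frag_extend_eq) (use k conn_class_rep(3) in auto)
  also have "\<dots> = c" by (rule frag_expansion[symmetric])
  finally show ?thesis .
qed

lemma Emap_carrier: "Poly_Mapping.keys c \<subseteq> conn_classes \<Longrightarrow> Poly_Mapping.keys (Emap c) \<subseteq> fin_racks"
  unfolding Emap_def using keys_frag_extend[of "\<lambda>C. frag_of (SOME R. R \<in> C)" c] conn_class_rep(2)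
  by fastforce

lemma rel_iso: "R1 \<in> fin_racks \<Longrightarrow> R2 \<in> fin_racks \<Longrightarrow> rack_iso R1 R2
   \<Longrightarrow> frag_of R1 - frag_of R2 \<in> burnside_rels fin_racks"
  unfolding burnside_rels_def
  apply (rule UnI1) apply (rule CollectI) apply (rule exI[of _ R1], rule exI[of _ R2]) by simp

lemma rel_dec: "(A, op) \<in> fin_racks \<Longrightarrow> rack_decomp S T A op
   \<Longrightarrow> frag_of (A, op) - frag_of (S, op) - frag_of (T, op) \<in> burnside_rels fin_racks"
  unfolding burnside_rels_def
  apply (rule UnI2) apply (rule CollectI)
  apply (rule exI[of _ A], rule exI[of _ op], rule exI[of _ S], rule exI[of _ T]) by simp

lemma conn_classesI: "(A, op) \<in> fin_racks \<Longrightarrow> rack_connected A op \<Longrightarrow> iso_class (A, op) \<in> conn_classes"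
  unfolding conn_classes_def
  apply (rule CollectI) apply (rule exI[of _ A], rule exI[of _ op]) by simp

lemma surj_gen:
  assumes "(A, op) \<in> fin_racks"
  shows "\<exists>c. Poly_Mapping.keys c \<subseteq> conn_classes \<and> frag_of (A, op) - Emap c \<in> burnside_sub"
  using assms
proof (induction "card A" arbitrary: A rule: less_induct)
  case less
  have r: "is_rack A op" and fA: "finite A" using less.prems by (auto simp: fin_racks_def)
  show ?case
  proof (cases "conn' A op")
    case True
    define C where "C = iso_class (A, op)"
    have C: "C \<in> conn_classes" unfolding C_def
      by (rule conn_classesI[OF less.prems]) (use True conn_iff[OF r fA] in simp)
    have "(SOME R. R \<in> C) \<in> C" using conn_class_rep(1)[OF C] .
    then have i: "rack_iso (A, op) (SOME R. R \<in> C)" "(SOME R. R \<in> C) \<in> fin_racks"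
      by (auto simp: C_def iso_class_def)
    have "frag_of (A, op) - frag_of (SOME R. R \<in> C) \<in> burnside_rels fin_racks"
      by (rule rel_iso[OF less.prems i(2,1)])
    then have "frag_of (A, op) - Emap (frag_of C) \<in> burnside_sub"
      by (simp add: Emap_def rel_N)
    then show ?thesis using C by (intro exI[of _ "frag_of C"]) simp
  next
    case nc: False
    show ?thesis
    proof (cases "A = {}")
      case True
      have "rack_decomp {} {} A op" using True by (simp add: rack_decomp_def subrack_def)
      then have "frag_of (A, op) - frag_of ({}, op) - frag_of ({}, op) \<in> burnside_rels fin_racks"
        by (rule rel_dec[OF less.prems])
      then have "- frag_of (A, op) \<in> burnside_sub" using True rel_N by simp
      then have "frag_of (A, op) \<in> burnside_sub" using N_neg by fastforce
      then show ?thesis by (intro exI[of _ 0]) (simp add: Emap_def)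
    next
      case ne: False
      then obtain S where S: "inv_set A op S" "S \<noteq> {}" "S \<noteq> A" using nc by (auto simp: conn'_def)
      have SA: "S \<subseteq> A" using S(1) by (simp add: inv_set_def)
      have d: "rack_decomp S (A - S) A op" using inv_set_decomp[OF r fA S(1)] .
      have fS: "(S, op) \<in> fin_racks" "(A - S, op) \<in> fin_racks"
        using d subrack_fin[OF less.prems] by (auto simp: rack_decomp_def)
      have c1: "card S < card A" using SA S(3) fA by (simp add: psubset_card_mono psubsetI)
      have c2: "card (A - S) < card A" using SA S(2) fA
        by (intro psubset_card_mono fA) blast
      obtain a1 where a1: "Poly_Mapping.keys a1 \<subseteq> conn_classes" "frag_of (S, op) - Emap a1 \<in> burnside_sub"
        using less.hyps[OF c1 fS(1)] by blast
      obtain a2 where a2: "Poly_Mapping.keys a2 \<subseteq> conn_classes" "frag_of (A - S, op) - Emap a2 \<in> burnside_sub"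
        using less.hyps[OF c2 fS(2)] by blast
      have rel: "frag_of (A, op) - frag_of (S, op) - frag_of (A - S, op) \<in> burnside_sub"
        by (rule rel_N[OF rel_dec[OF less.prems d]])
      have mem: "(frag_of (A, op) - frag_of (S, op) - frag_of (A - S, op))
          + (frag_of (S, op) - Emap a1) + (frag_of (A - S, op) - Emap a2) \<in> burnside_sub"
        by (intro N_add rel a1(2) a2(2))
      have eq: "(frag_of (A, op) - frag_of (S, op) - frag_of (A - S, op))
          + (frag_of (S, op) - Emap a1) + (frag_of (A - S, op) - Emap a2)
          = frag_of (A, op) - Emap (a1 + a2)"
        by (simp add: Emap_def frag_extend_add)
      have "Poly_Mapping.keys (a1 + a2) \<subseteq> conn_classes"
        using a1(1) a2(1) keys_add[of a1 a2] by blast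
      moreover have "frag_of (A, op) - Emap (a1 + a2) \<in> burnside_sub" using mem unfolding eq .
      ultimately show ?thesis by blast
    qed
  qed
qed

lemma surj_all:
  assumes "Poly_Mapping.keys x \<subseteq> fin_racks"
  shows "\<exists>c. Poly_Mapping.keys c \<subseteq> conn_classes \<and> x - Emap c \<in> burnside_sub"
proof (rule free_Abelian_group_induct[OF assms,
    where P="\<lambda>x. \<exists>c. Poly_Mapping.keys c \<subseteq> conn_classes \<and> x - Emap c \<in> burnside_sub"])
  have "(0::nrack \<Rightarrow>\<^sub>0 int) \<in> burnside_sub" using subgroup.one_closed[OF N_subgroup] by simp
  then show "\<exists>c. Poly_Mapping.keys c \<subseteq> conn_classes \<and> 0 - Emap c \<in> burnside_sub"
    by (intro exI[of _ 0]) (simp add: Emap_def)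
next
  fix x y :: "nrack \<Rightarrow>\<^sub>0 int"
  assume "\<exists>c. Poly_Mapping.keys c \<subseteq> conn_classes \<and> x - Emap c \<in> burnside_sub"
    "\<exists>c. Poly_Mapping.keys c \<subseteq> conn_classes \<and> y - Emap c \<in> burnside_sub"
  then obtain a b where a: "Poly_Mapping.keys a \<subseteq> conn_classes" "x - Emap a \<in> burnside_sub"
    and b: "Poly_Mapping.keys b \<subseteq> conn_classes" "y - Emap b \<in> burnside_sub" by blast
  have mem: "(x - Emap a) - (y - Emap b) \<in> burnside_sub" by (rule N_diff[OF a(2) b(2)])
  have eq: "(x - Emap a) - (y - Emap b) = (x - y) - Emap (a - b)"
    by (simp add: Emap_def frag_extend_diff)
  have "Poly_Mapping.keys (a - b) \<subseteq> conn_classes"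
    using a(1) b(1) keys_diff[of a b] by blast
  moreover have "(x - y) - Emap (a - b) \<in> burnside_sub" using mem unfolding eq .
  ultimately show "\<exists>c. Poly_Mapping.keys c \<subseteq> conn_classes \<and> (x - y) - Emap c \<in> burnside_sub" by blast
next
  fix R assume R: "R \<in> fin_racks"
  obtain A op where "R = (A, op)" by (cases R)
  then show "\<exists>c. Poly_Mapping.keys c \<subseteq> conn_classes \<and> frag_of R - Emap c \<in> burnside_sub"
    using surj_gen R by blast
qed

lemma N_normal: "burnside_sub \<lhd> GG"
  by (rule comm_group.subgroup_imp_normal[OF abelian_free_Abelian_group N_subgroup])

lemma grp_Mod: "group burnside_group"
  unfolding burnside_group_def by (rule normal.factorgroup_is_group[OF N_normal])

lemma Emap_hom: "Emap \<in> hom FF GG"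
  unfolding hom_def using Emap_carrier by (auto simp: Emap_def frag_extend_add)

lemma ctb_eq: "conn_to_burnside = (\<lambda>a. burnside_sub #>\<^bsub>GG\<^esub> a) \<circ> Emap"
  by (rule ext) (simp add: conn_to_burnside_def Emap_def)

lemma ctb_hom: "conn_to_burnside \<in> hom FF burnside_group"
  unfolding ctb_eq burnside_group_def
  by (rule hom_compose[OF Emap_hom normal.r_coset_hom_Mod[OF N_normal]])

lemma ctb_inj: "inj_on conn_to_burnside (carrier FF)"
proof (rule inj_onI)
  fix c d assume c: "c \<in> carrier FF" and d: "d \<in> carrier FF"
    and e: "conn_to_burnside c = conn_to_burnside d"
  have ec: "Emap c \<in> carrier GG" and ed: "Emap d \<in> carrier GG" using c d Emap_carrier by auto
  have "burnside_sub #>\<^bsub>GG\<^esub> Emap d = burnside_sub #>\<^bsub>GG\<^esub> Emap c"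
    using e by (simp add: ctb_eq)
  then have "Emap c \<in> burnside_sub #>\<^bsub>GG\<^esub> Emap d"
    by (rule group.repr_independenceD[OF group_free_Abelian_group N_subgroup ec])
  then have "Emap c \<otimes>\<^bsub>GG\<^esub> inv\<^bsub>GG\<^esub> Emap d \<in> burnside_sub"
    by (rule subgroup.rcos_module_imp[OF N_subgroup group_free_Abelian_group ed])
  then have "Emap c - Emap d \<in> burnside_sub" using ed by simp
  then have "Psi (Emap c - Emap d) = 0" by (rule Psi_N)
  then have "Psi (Emap c) - Psi (Emap d) = 0" by (simp add: Psi_def frag_extend_diff)
  then show "c = d" using Psi_Emap c d by simp
qed

lemma ctb_surj: "conn_to_burnside ` carrier FF = carrier burnside_group"
proof (rule equalityI; rule subsetI)
  fix X assume "X \<in> conn_to_burnside ` carrier FF"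
  then obtain c where c: "c \<in> carrier FF" "X = conn_to_burnside c" by blast
  then have "Emap c \<in> carrier GG" using Emap_carrier by auto
  then show "X \<in> carrier burnside_group"
    using c by (auto simp: burnside_group_def carrier_FactGroup ctb_eq)
next
  fix X assume "X \<in> carrier burnside_group"
  then obtain x where x: "x \<in> carrier GG" "X = burnside_sub #>\<^bsub>GG\<^esub> x"
    by (auto simp: burnside_group_def carrier_FactGroup)
  obtain c where c: "Poly_Mapping.keys c \<subseteq> conn_classes" "x - Emap c \<in> burnside_sub"
    using surj_all[of x] x(1) by auto
  have ec: "Emap c \<in> carrier GG" using c Emap_carrier by auto
  have "x \<otimes>\<^bsub>GG\<^esub> inv\<^bsub>GG\<^esub> Emap c \<in> burnside_sub" using c ec by simp
  then have "x \<in> burnside_sub #>\<^bsub>GG\<^esub> Emap c"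
    by (rule subgroup.rcos_module_rev[OF N_subgroup group_free_Abelian_group ec x(1)])
  then have "burnside_sub #>\<^bsub>GG\<^esub> Emap c = burnside_sub #>\<^bsub>GG\<^esub> x"
    by (rule group.repr_independence[OF group_free_Abelian_group _ ec N_subgroup])
  then have "X = conn_to_burnside c" using x by (simp add: ctb_eq)
  then show "X \<in> conn_to_burnside ` carrier FF" using c by auto
qed

lemma ctb_iso: "conn_to_burnside \<in> iso FF burnside_group"
  unfolding iso_def bij_betw_def using ctb_hom ctb_inj ctb_surj by blast

lemma ctb_zero: "conn_to_burnside 0 = \<one>\<^bsub>burnside_group\<^esub>"
proof -
  have "conn_to_burnside 0 = burnside_sub #>\<^bsub>GG\<^esub> \<one>\<^bsub>GG\<^esub>"
    by (simp add: conn_to_burnside_def)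
  also have "\<dots> = burnside_sub"
    by (rule group.coset_mult_one[OF group_free_Abelian_group subgroup.subset[OF N_subgroup]])
  finally show ?thesis by (simp add: burnside_group_def)
qed

lemma torsion_free:
  assumes x: "x \<in> carrier burnside_group" and n: "(n::int) \<noteq> 0"
    and p: "x [^]\<^bsub>burnside_group\<^esub> n = \<one>\<^bsub>burnside_group\<^esub>"
  shows "x = \<one>\<^bsub>burnside_group\<^esub>"
proof -
  obtain c where c: "c \<in> carrier FF" "x = conn_to_burnside c" using x ctb_surj by blast
  have "conn_to_burnside (c [^]\<^bsub>FF\<^esub> n) = x [^]\<^bsub>burnside_group\<^esub> n"
    using hom_int_pow[OF ctb_hom c(1) group_free_Abelian_group grp_Mod] c(2) by simp
  then have "conn_to_burnside (frag_cmul n c) = conn_to_burnside 0"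
    using p c(1) ctb_zero by simp
  moreover have "frag_cmul n c \<in> carrier FF" using c(1) keys_cmul[of n c] by auto
  ultimately have "frag_cmul n c = 0" using ctb_inj c(1) by (auto dest: inj_onD)
  then have "c = 0" using n
    by (metis (no_types) lookup_frag_cmul mult_eq_0_iff poly_mapping_eqI lookup_zero)
  then show ?thesis using c(2) ctb_zero by simp
qed

theorem theorem4p1:
  shows "conn_to_burnside \<in> iso (free_Abelian_group conn_classes) burnside_group
    \<and> (\<forall>x\<in>carrier burnside_group. \<forall>n::int. n \<noteq> 0 \<longrightarrow>
          x [^]\<^bsub>burnside_group\<^esub> n = \<one>\<^bsub>burnside_group\<^esub> \<longrightarrow> x = \<one>\<^bsub>burnside_group\<^esub>)"
  using ctb_iso torsion_free by blast

end
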